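(* Fix $1<p<\infty$. Fix natural numbers $l_1,\dots,l_d$, $0<\mu<1$, $\lambda,\Theta>0$, and $M>\lambda/\Theta$. Then for any $0<\eta_1<1$ there exists $0<\eta<\eta_1$ with the following property. Suppose $l_{d+1}$ is a natural number, $L=\prod_{i=1}^{d+1}l_i$, $T=\bigcup_{i=0}^{d+1}\Lambda_i$ is an $(l_1,\dots,l_{d+1})$ interval tree, and $(r_I)_{I\in T},(s_I)_{I\in T}$ are non-negative numbers such that (i) for each $I\in T$, $r_I\le\lambda s_I$; (ii) for each $I\in T\setminus\Lambda_{d+1}$, $r_I\le\sum_{J^-=I}r_J$ and $s_I\le\sum_{J^-=I}s_J$; (iii) for each $I\in\Lambda_d$, $r_I^p\le(1+\eta)\Theta^p l_{d+1}^{p-1}\sum_{J^-=I}s_J^p$; (iv) $r_{[L]}^p>(1-\eta)\Theta^p\bigl(\prod_{i=1}^{d+1}l_i^{p-1}\bigr)\sum_{I\in\Lambda_{d+1}}s_I^p$. Then for any $0\le j\le d$, $\max_{I\in\Lambda_j}s_I\le M\min_{I\in\Lambda_j}s_I$, and for any $0\le i<d$ and $I_1\in\Lambda_i$, $r_{I_1}^p>(1-\mu)l_{i+1}^{p-1}\sum_{J^-=I_1}r_J^p$.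
   Context: $[n]=\{1,\dots,n\}$. Given natural numbers $l_1,\dots,l_{k}$ with $L=\prod_{j=1}^{k}l_j$, an $(l_1,\dots,l_k)$ interval tree $T=\bigcup_{i=0}^k\Lambda_i$ is built as follows: $\Lambda_0=\{[L]\}$; if $\Lambda_i$ ($i<k$) consists of pairwise disjoint integer subintervals of $[L]$ each of cardinality $\prod_{j=i+1}^k l_j$, then each $I\in\Lambda_i$ is partitioned into $l_{i+1}$ integer subintervals of equal cardinality, and $\Lambda_{i+1}$ is the set of all these subintervals over all $I\in\Lambda_i$. For $0<j\le k$ and $J\in\Lambda_j$, $J^-$ denotes the unique $I\in\Lambda_{j-1}$ with $J\subset I$; sums $\sum_{J^-=I}$ range over the children of $I$. *)

theory Defs
  imports Complex_Main
begin

text \<open>Lengths are given by a function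
  l :: nat => nat (only l 1, ..., l k matter). Level 0 is {[L]} with [L] = {1..L};
  each interval of level i (whose cardinality is the product of l (i+1) ... l k) is cut into
  l (i+1) consecutive integer subintervals of equal cardinality (product of l (i+2) ... l k).\<close>

fun tree_level :: "(nat \<Rightarrow> nat) \<Rightarrow> nat \<Rightarrow> nat \<Rightarrow> nat set set" where
  "tree_level l k 0 = {{1..(\<Prod>j\<in>{1..k}. l j)}}"
| "tree_level l k (Suc i) =
     (let c = (\<Prod>j\<in>{Suc (Suc i)..k}. l j) in
      (\<Union>I\<in>tree_level l k i.
         {{Min I + m * c ..< Min I + Suc m * c} | m. m < l (Suc i)}))"

definition interval_tree :: "(nat \<Rightarrow> nat) \<Rightarrow> nat \<Rightarrow> nat set set" where
  "interval_tree l k = (\<Union>i\<in>{0..k}. tree_level l k i)"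

text \<open>Children J (with J^- = I) of an interval I of level i: the intervals of level i+1
  contained in I.\<close>
definition tree_children :: "(nat \<Rightarrow> nat) \<Rightarrow> nat \<Rightarrow> nat \<Rightarrow> nat set \<Rightarrow> nat set set" where
  "tree_children l k i I = {J \<in> tree_level l k (Suc i). J \<subseteq> I}"

end

theory Submission
  imports Defs "HOL-Analysis.Convex"
begin

lemma bern_weak:
  fixes t p :: real assumes "0 \<le> t" "1 \<le> p"
  shows "1 + p * (t - 1) \<le> t powr p"
proof (cases "t = 0 \<or> p = 1")
  case True then show ?thesis using assms by auto
next
  case False
  then have t: "t > 0" and p: "p > 1" using assms by auto
  have "(t powr p) powr (1/p) * 1 powr (1 - 1/p) \<le> (1/p) * t powr p + (1 - 1/p) * 1"
    by (rule Youngs_inequality_0) (use t p in auto)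
  then have "t \<le> (1/p) * t powr p + (1 - 1/p)"
    using t p by (simp add: powr_powr)
  then have "p * t \<le> p * ((1/p) * t powr p + (1 - 1/p))" using p by simp
  also have "\<dots> = t powr p + p - 1" using p by (simp add: algebra_simps)
  finally show ?thesis by (simp add: algebra_simps)
qed

lemma bern_strict:
  fixes t p :: real assumes "1 < t" "1 < p"
  shows "1 + p * (t - 1) < t powr p"
proof -
  define s where "s = sqrt t"
  have s: "s > 1" "s * s = t" using assms by (auto simp: s_def)
  have "t powr p = (s powr p) * (s powr p)" using s by (metis powr_mult)
  also have "\<dots> \<ge> (1 + p * (s - 1)) * (1 + p * (s - 1))"
    using bern_weak[of s p] s assms by (intro mult_mono) auto
  finally have "(1 + p * (s - 1)) * (1 + p * (s - 1)) \<le> t powr p" .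
  moreover have "1 + p * (t - 1) < (1 + p * (s - 1)) * (1 + p * (s - 1))"
  proof -
    have "0 < (s-1)*(s-1)" using s by simp
    moreover have "p < p*p" using assms by simp
    ultimately have "p * ((s-1) * (s-1)) < p * p * ((s-1)*(s-1))"
      by (intro mult_strict_right_mono) auto
    then show ?thesis using s by (simp add: algebra_simps)
  qed
  ultimately show ?thesis by linarith
qed

lemma power_mean:
  fixes f :: "'a \<Rightarrow> real" and p :: real
  assumes "finite A" "A \<noteq> {}" "\<forall>x\<in>A. 0 \<le> f x" "1 \<le> p"
  shows "(\<Sum>x\<in>A. f x) powr p \<le> real (card A) powr (p - 1) * (\<Sum>x\<in>A. f x powr p)"
proof (cases "(\<Sum>x\<in>A. f x) = 0")
  case True then show ?thesis using assms by (simp add: sum_nonneg)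
next
  case False
  define c where "c = real (card A)"
  have c: "c > 0" using assms by (simp add: c_def card_gt_0_iff)
  define m where "m = (\<Sum>x\<in>A. f x) / c"
  have "(\<Sum>x\<in>A. f x) \<ge> 0" using assms by (simp add: sum_nonneg)
  then have m: "m > 0" using False c by (simp add: m_def)
  have "(\<Sum>x\<in>A. 1 + p * (f x / m - 1)) \<le> (\<Sum>x\<in>A. (f x / m) powr p)"
    using assms m by (intro sum_mono bern_weak) auto
  moreover have "(\<Sum>x\<in>A. 1 + p * (f x / m - 1)) = c"
  proof -
    have "(\<Sum>x\<in>A. 1 + p * (f x / m - 1)) = c + p * ((\<Sum>x\<in>A. f x) / m) - p * c"
      by (simp add: sum.distrib sum_subtractf sum_distrib_left[symmetric] sum_divide_distrib[symmetric] c_def algebra_simps)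
    also have "(\<Sum>x\<in>A. f x) / m = c" using m c False by (simp add: m_def)
    finally show ?thesis by simp
  qed
  moreover have "(\<Sum>x\<in>A. (f x / m) powr p) = (\<Sum>x\<in>A. f x powr p) / m powr p"
    using assms m by (simp add: powr_divide sum_divide_distrib)
  ultimately have "c * m powr p \<le> (\<Sum>x\<in>A. f x powr p)"
    using m by (simp add: pos_le_divide_eq)
  moreover have "(\<Sum>x\<in>A. f x) powr p = c powr (p - 1) * (c * m powr p)"
  proof -
    have "(\<Sum>x\<in>A. f x) = c * m" using c by (simp add: m_def)
    then have "(\<Sum>x\<in>A. f x) powr p = c powr p * m powr p" using c m by (simp add: powr_mult)
    also have "c powr p = c powr (p - 1) * c" using c by (simp add: powr_diff)
    finally show ?thesis by simp
  qed
  ultimately show ?thesis using c by (simp add: c_def mult_left_mono)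
qed

declare tree_level.simps(2)[simp del]

definition NN :: "(nat \<Rightarrow> nat) \<Rightarrow> nat \<Rightarrow> nat" where "NN l j = (\<Prod>i\<in>{1..j}. l i)"
definition CC :: "(nat \<Rightarrow> nat) \<Rightarrow> nat \<Rightarrow> nat \<Rightarrow> nat" where "CC l k j = (\<Prod>i\<in>{Suc j..k}. l i)"
definition BB :: "(nat \<Rightarrow> nat) \<Rightarrow> nat \<Rightarrow> nat \<Rightarrow> nat \<Rightarrow> nat set" where
  "BB l k j m = {1 + m * CC l k j ..< 1 + Suc m * CC l k j}"

lemma NN_Suc: "NN l (Suc j) = NN l j * l (Suc j)"
  by (simp add: NN_def prod.cl_ivl_Suc)

lemma CC_Suc: "j < k \<Longrightarrow> CC l k j = l (Suc j) * CC l k (Suc j)"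
  by (simp add: CC_def prod.atLeast_Suc_atMost)

lemma CC_pos: "\<forall>i\<in>{1..k}. 1 \<le> l i \<Longrightarrow> 0 < CC l k j"
  unfolding CC_def
proof (rule prod_pos)
  fix i assume "\<forall>i\<in>{1..k}. 1 \<le> l i" "i \<in> {Suc j..k}"
  then show "0 < l i" by (metis atLeastAtMost_iff Suc_le_eq le0 le_less_trans less_one not_less)
qed

lemma NN_pos: "\<forall>i\<in>{1..k}. 1 \<le> l i \<Longrightarrow> j \<le> k \<Longrightarrow> 0 < NN l j"
  unfolding NN_def
proof (rule prod_pos)
  fix i assume "\<forall>i\<in>{1..k}. 1 \<le> l i" "j \<le> k" "i \<in> {1..j}"
  then show "0 < l i" by (metis atLeastAtMost_iff le_trans less_one not_less)
qed

lemma CC_self: "CC l k k = 1" by (simp add: CC_def)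
lemma NN_0: "NN l 0 = 1" by (simp add: NN_def)

lemma NN_CC: "j \<le> k \<Longrightarrow> NN l j * CC l k j = NN l k"
proof (induction k)
  case 0 then show ?case by (simp add: CC_def NN_def)
next
  case (Suc k)
  show ?case
  proof (cases "j = Suc k")
    case True then show ?thesis by (simp add: CC_self)
  next
    case False
    then have "j \<le> k" using Suc by simp
    then have "CC l (Suc k) j = CC l k j * l (Suc k)" by (simp add: CC_def prod.cl_ivl_Suc)
    then show ?thesis using Suc.IH[OF \<open>j \<le> k\<close>] by (simp add: NN_Suc)
  qed
qed

lemma Min_BB: "0 < CC l k j \<Longrightarrow> Min (BB l k j m) = 1 + m * CC l k j"
  unfolding BB_def by (rule Min_eqI) auto

lemma in_BB: "0 < CC l k j \<Longrightarrow> 1 + m * CC l k j \<in> BB l k j m"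
  unfolding BB_def by auto

lemma inj_BB: assumes "0 < CC l k j" shows "inj (BB l k j)"
proof
  fix a b assume "BB l k j a = BB l k j b"
  then have "Min (BB l k j a) = Min (BB l k j b)" by simp
  then have "a * CC l k j = b * CC l k j" using Min_BB[OF assms] by simp
  then show "a = b" using assms by simp
qed

lemma tree_level_eq:
  assumes pos: "\<forall>i\<in>{1..k}. 1 \<le> l i"
  shows "j \<le> k \<Longrightarrow> tree_level l k j = BB l k j ` {..<NN l j}"
proof (induction j)
  case 0
  have "{1..(\<Prod>j\<in>{1..k}. l j)} = BB l k 0 0"
    by (auto simp: BB_def CC_def)
  moreover have "BB l k 0 ` {..<NN l 0} = {BB l k 0 0}" by (auto simp: NN_0)
  ultimately show ?case by simp
next
  case (Suc j)
  then have jk: "j < k" by simp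
  define c where "c = CC l k (Suc j)"
  define ll where "ll = l (Suc j)"
  have cpos: "0 < c" using CC_pos[OF pos] c_def by simp
  have Cj: "CC l k j = ll * c" using CC_Suc[OF jk] by (simp add: c_def ll_def)
  have Cjpos: "0 < CC l k j" using CC_pos[OF pos] by simp
  have key: "{Min (BB l k j m) + t * c ..< Min (BB l k j m) + Suc t * c} = BB l k (Suc j) (m * ll + t)" for m t
  proof -
    have "Min (BB l k j m) = 1 + m * (ll * c)" using Min_BB[OF Cjpos] Cj by simp
    then show ?thesis unfolding BB_def c_def[symmetric] by (simp add: algebra_simps)
  qed
  have "tree_level l k (Suc j) = (\<Union>I\<in>tree_level l k j. {{Min I + t * c ..< Min I + Suc t * c} | t. t < ll})"
    by (simp only: tree_level.simps Let_def c_def ll_def CC_def)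
  also have "\<dots> = (\<Union>I\<in>BB l k j ` {..<NN l j}. {{Min I + t * c ..< Min I + Suc t * c} | t. t < ll})"
    using Suc by simp
  also have "\<dots> = BB l k (Suc j) ` {..<NN l (Suc j)}"
  proof (intro equalityI subsetI)
    fix J assume "J \<in> (\<Union>I\<in>BB l k j ` {..<NN l j}. {{Min I + t * c ..< Min I + Suc t * c} | t. t < ll})"
    then obtain m t where mt: "m < NN l j" "t < ll" "J = BB l k (Suc j) (m * ll + t)"
      using key by auto
    have "m * ll + t < NN l (Suc j)"
    proof -
      have "m * ll + t < m * ll + ll" using mt by simp
      also have "\<dots> = Suc m * ll" by simp
      also have "\<dots> \<le> NN l j * ll" using mt by (intro mult_le_mono1) simp
      finally show ?thesis by (simp add: NN_Suc ll_def)
    qed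
    then show "J \<in> BB l k (Suc j) ` {..<NN l (Suc j)}" using mt by auto
  next
    fix J assume "J \<in> BB l k (Suc j) ` {..<NN l (Suc j)}"
    then obtain a where a: "a < NN l j * ll" "J = BB l k (Suc j) a" by (auto simp: NN_Suc ll_def)
    have llpos: "0 < ll" using a by (cases "ll = 0") auto
    have "a div ll < NN l j" using a llpos by (simp add: less_mult_imp_div_less)
    moreover have "J = {Min (BB l k j (a div ll)) + (a mod ll) * c ..< Min (BB l k j (a div ll)) + Suc (a mod ll) * c}"
      using key a by simp
    moreover have "a mod ll < ll" using llpos by simp
    ultimately show "J \<in> (\<Union>I\<in>BB l k j ` {..<NN l j}. {{Min I + t * c ..< Min I + Suc t * c} | t. t < ll})"
      by blast
  qed
  finally show ?case .
qed

lemma children_eq: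
  assumes pos: "\<forall>i\<in>{1..k}. 1 \<le> l i" and jk: "j < k" and m: "m < NN l j"
  shows "tree_children l k j (BB l k j m) = BB l k (Suc j) ` {m * l (Suc j) ..< m * l (Suc j) + l (Suc j)}"
proof -
  define c where "c = CC l k (Suc j)"
  define ll where "ll = l (Suc j)"
  have cpos: "0 < c" using CC_pos[OF pos] c_def by simp
  have Cj: "CC l k j = ll * c" using CC_Suc[OF jk] by (simp add: c_def ll_def)
  have TL: "tree_level l k (Suc j) = BB l k (Suc j) ` {..<NN l (Suc j)}"
    by (rule tree_level_eq[OF pos]) (use jk in simp)
  show ?thesis
  proof (intro equalityI subsetI)
    fix J assume "J \<in> tree_children l k j (BB l k j m)"
    then have J: "J \<in> tree_level l k (Suc j)" "J \<subseteq> BB l k j m" by (auto simp: tree_children_def)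
    then obtain a where a: "a < NN l (Suc j)" "J = BB l k (Suc j) a" using TL by auto
    have "1 + a * c \<in> BB l k j m" using J a in_BB[of l k "Suc j" a] cpos c_def by auto
    then have "m * (ll * c) \<le> a * c" "a * c < Suc m * (ll * c)" unfolding BB_def Cj by auto
    then have "m * ll \<le> a" "a < Suc m * ll" using cpos
      by (simp_all add: mult.assoc[symmetric])
    then show "J \<in> BB l k (Suc j) ` {m * l (Suc j) ..< m * l (Suc j) + l (Suc j)}"
      using a by (auto simp: ll_def)
  next
    fix J assume "J \<in> BB l k (Suc j) ` {m * l (Suc j) ..< m * l (Suc j) + l (Suc j)}"
    then obtain a where a: "m * ll \<le> a" "a < m * ll + ll" "J = BB l k (Suc j) a" by (auto simp: ll_def)
    have "a < NN l (Suc j)"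
    proof -
      have "a < Suc m * ll" using a by simp
      also have "\<dots> \<le> NN l j * ll" using m by (intro mult_le_mono1) simp
      finally show ?thesis by (simp add: NN_Suc ll_def)
    qed
    then have "J \<in> tree_level l k (Suc j)" using TL a by auto
    moreover have "J \<subseteq> BB l k j m"
    proof -
      have "m * ll * c \<le> a * c" using a by simp
      moreover have "Suc a * c \<le> Suc m * ll * c" using a by (intro mult_le_mono1) simp
      ultimately show ?thesis unfolding a(3) BB_def Cj c_def[symmetric]
        by (auto simp: algebra_simps)
    qed
    ultimately show "J \<in> tree_children l k j (BB l k j m)" by (simp add: tree_children_def)
  qed
qed

lemma powr_le_cancel': "0 < a \<Longrightarrow> 0 \<le> x \<Longrightarrow> 0 \<le> y \<Longrightarrow> x powr a \<le> y powr a \<Longrightarrow> x \<le> y"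
  for x y a :: real by (meson not_le powr_less_mono2)

lemma powr_less_cancel': "0 < a \<Longrightarrow> 0 \<le> x \<Longrightarrow> 0 \<le> y \<Longrightarrow> x powr a < y powr a \<Longrightarrow> x < y"
  for x y a :: real by (meson not_le powr_mono2 less_imp_le)

lemma sum_group: "(\<Sum>m<(N::nat). \<Sum>a\<in>{m*c..<m*c+c}. g a) = (\<Sum>a<N*(c::nat). g a)"
proof (induction N)
  case 0 then show ?case by simp
next
  case (Suc N)
  have "(\<Sum>m<Suc N. \<Sum>a\<in>{m*c..<m*c+c}. g a) = (\<Sum>a<N*c. g a) + (\<Sum>a\<in>{N*c..<N*c+c}. g a)"
    using Suc by simp
  also have "\<dots> = (\<Sum>a\<in>{0..<N*c}. g a) + (\<Sum>a\<in>{N*c..<N*c+c}. g a)"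
    by (simp add: atLeast0LessThan)
  also have "\<dots> = (\<Sum>a\<in>{0..<N*c+c}. g a)" by (rule sum.atLeastLessThan_concat) auto
  also have "\<dots> = (\<Sum>a<Suc N*c. g a)" by (simp add: atLeast0LessThan add.commute)
  finally show ?case .
qed

lemma main_fixed:
  fixes p \<mu> lam \<Theta> M \<eta> \<epsilon> \<tau> :: real and d :: nat and l :: "nat \<Rightarrow> nat"
    and r s :: "nat set \<Rightarrow> real"
  assumes p: "1 < p" and lpos: "\<forall>i\<in>{1..Suc d}. 1 \<le> l i"
    and mu: "0 < \<mu>" "\<mu> < 1" and lam: "0 < lam" and Th: "0 < \<Theta>" and M: "M > lam / \<Theta>"
    and tau1: "lam / (M * \<Theta>) \<le> \<tau>" and tau2: "(1 - \<mu>) powr (1/p) \<le> \<tau>" and tau3: "\<tau> < 1"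
    and eps: "0 < \<epsilon>" "\<epsilon> \<le> 1" "\<epsilon> * real (NN l d) \<le> (1 - \<tau>) / 4"
    and eta: "0 < \<eta>" "\<eta> < 1" "3 * \<eta> * real (NN l d) \<le> (1 - \<tau>) / 4"
      "2 * p * real (NN l d) * \<eta> \<le> (1 + \<epsilon>) powr p - 1 - p * \<epsilon>"
    and H1: "\<forall>I\<in>interval_tree l (Suc d). 0 \<le> r I \<and> 0 \<le> s I"
    and H2: "\<forall>I\<in>interval_tree l (Suc d). r I \<le> lam * s I"
    and H3: "\<forall>i\<le>d. \<forall>I\<in>tree_level l (Suc d) i. r I \<le> (\<Sum>J\<in>tree_children l (Suc d) i I. r J)
                 \<and> s I \<le> (\<Sum>J\<in>tree_children l (Suc d) i I. s J)"
    and H4: "\<forall>I\<in>tree_level l (Suc d) d. r I powr p \<le> (1 + \<eta>) * \<Theta> powr p * real (l (Suc d)) powr (p - 1)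
                 * (\<Sum>J\<in>tree_children l (Suc d) d I. s J powr p)"
    and H5: "r {1..(\<Prod>i\<in>{1..Suc d}. l i)} powr p > (1 - \<eta>) * \<Theta> powr p
                 * (\<Prod>i\<in>{1..Suc d}. real (l i) powr (p - 1))
                 * (\<Sum>I\<in>tree_level l (Suc d) (Suc d). s I powr p)"
  shows "(\<forall>j\<le>d. Max (s ` tree_level l (Suc d) j) \<le> M * Min (s ` tree_level l (Suc d) j))
       \<and> (\<forall>i<d. \<forall>I1\<in>tree_level l (Suc d) i. r I1 powr p > (1 - \<mu>) * real (l (Suc i)) powr (p - 1)
                                 * (\<Sum>J\<in>tree_children l (Suc d) i I1. r J powr p))"
proof -
  define B where "B = BB l (Suc d)"
  define n where "n = NN l d"
  define ll where "ll = l (Suc d)"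
  have TL: "tree_level l (Suc d) j = B j ` {..<NN l j}" if "j \<le> Suc d" for j
    unfolding B_def by (rule tree_level_eq[OF lpos that])
  have injB: "inj_on (B j) A" for j A
    unfolding B_def by (rule inj_on_subset[OF inj_BB[OF CC_pos[OF lpos]]]) simp
  have SL: "(\<Sum>I\<in>tree_level l (Suc d) j. f I) = (\<Sum>a<NN l j. f (B j a))" if "j \<le> Suc d" for j f
    unfolding TL[OF that] by (simp add: sum.reindex[OF injB])
  have SC: "(\<Sum>J\<in>tree_children l (Suc d) j (B j m). f J)
            = (\<Sum>a\<in>{m * l (Suc j)..<m * l (Suc j) + l (Suc j)}. f (B (Suc j) a))"
    if "j < Suc d" "m < NN l j" for j m f
    unfolding B_def children_eq[OF lpos that] by (simp add: sum.reindex[OF injB[unfolded B_def]])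
  have inL: "B j a \<in> tree_level l (Suc d) j" if "j \<le> Suc d" "a < NN l j" for j a
    using TL[OF that(1)] that(2) by simp
  have inT: "B j a \<in> interval_tree l (Suc d)" if "j \<le> Suc d" "a < NN l j" for j a
    unfolding interval_tree_def using inL[OF that] that(1) by auto
  have rnn: "0 \<le> r (B j a)" "0 \<le> s (B j a)" "r (B j a) \<le> lam * s (B j a)"
    if "j \<le> Suc d" "a < NN l j" for j a
    using H1 H2 inT[OF that] by auto
  have chlt: "a < NN l (Suc j)"
    if "m < NN l j" "a \<in> {m * l (Suc j)..<m * l (Suc j) + l (Suc j)}" for j m a
  proof -
    have "a < Suc m * l (Suc j)" using that by simp
    also have "\<dots> \<le> NN l j * l (Suc j)" using that by (intro mult_le_mono1) simp
    finally show ?thesis by (simp add: NN_Suc)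
  qed
  have sub: "r (B j m) \<le> (\<Sum>a\<in>{m * l (Suc j)..<m * l (Suc j) + l (Suc j)}. r (B (Suc j) a))"
            "s (B j m) \<le> (\<Sum>a\<in>{m * l (Suc j)..<m * l (Suc j) + l (Suc j)}. s (B (Suc j) a))"
    if "j \<le> d" "m < NN l j" for j m
  proof -
    have "B j m \<in> tree_level l (Suc d) j" using inL that by simp
    then have h: "r (B j m) \<le> sum r (tree_children l (Suc d) j (B j m))
        \<and> s (B j m) \<le> sum s (tree_children l (Suc d) j (B j m))" using H3 that by blast
    show "r (B j m) \<le> (\<Sum>a\<in>{m * l (Suc j)..<m * l (Suc j) + l (Suc j)}. r (B (Suc j) a))"
      using h SC[of j m r] that by simp
    show "s (B j m) \<le> (\<Sum>a\<in>{m * l (Suc j)..<m * l (Suc j) + l (Suc j)}. s (B (Suc j) a))"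
      using h SC[of j m s] that by simp
  qed
  have npos: "0 < n" unfolding n_def using NN_pos[OF lpos] by simp
  have llpos: "0 < ll" unfolding ll_def using bspec[OF lpos, of "Suc d"] by simp
  have NNk: "NN l (Suc d) = n * ll" by (simp add: NN_Suc n_def ll_def)
  define S where "S a = (\<Sum>t\<in>{a*ll..<a*ll+ll}. s (B (Suc d) t) powr p)" for a
  define x where "x a = (\<Theta> powr p * real ll powr (p - 1) * S a) powr (1/p)" for a
  have Snn: "0 \<le> S a" for a unfolding S_def by (simp add: sum_nonneg)
  have xp: "x a powr p = \<Theta> powr p * real ll powr (p - 1) * S a" for a
    unfolding x_def using p Snn[of a] by (simp add: powr_powr)
  have xnn: "0 \<le> x a" for a unfolding x_def by simp
  have F1: "r (B d a) \<le> (1 + \<eta>) * x a" if "a < n" for a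
  proof -
    have Bd: "B d a \<in> tree_level l (Suc d) d" using inL that n_def by simp
    have "r (B d a) powr p \<le> (1 + \<eta>) * \<Theta> powr p * real ll powr (p - 1)
                 * (\<Sum>J\<in>tree_children l (Suc d) d (B d a). s J powr p)"
      using bspec[OF H4 Bd] by (simp add: ll_def)
    also have "(\<Sum>J\<in>tree_children l (Suc d) d (B d a). s J powr p) = S a"
      using SC[of d a "\<lambda>J. s J powr p"] that by (simp add: n_def S_def ll_def)
    finally have "r (B d a) powr p \<le> (1 + \<eta>) * x a powr p"
      by (simp add: xp mult.assoc)
    also have "\<dots> \<le> (1 + \<eta>) powr p * x a powr p"
    proof (rule mult_right_mono)
      have "(1 + \<eta>) powr 1 \<le> (1 + \<eta>) powr p" using p eta by (intro powr_mono) auto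
      then show "1 + \<eta> \<le> (1 + \<eta>) powr p" using eta by simp
    qed simp
    also have "\<dots> = ((1 + \<eta>) * x a) powr p" using eta xnn by (simp add: powr_mult)
    finally have "r (B d a) powr p \<le> ((1 + \<eta>) * x a) powr p" .
    moreover have "0 \<le> r (B d a)" using rnn that n_def by simp
    moreover have "0 \<le> (1 + \<eta>) * x a" using eta xnn by simp
    ultimately show ?thesis using p by (metis powr_le_cancel' zero_less_one less_trans)
  qed
  have F2: "\<Theta> * s (B d a) \<le> x a" if "a < n" for a
  proof -
    have "s (B d a) \<le> (\<Sum>t\<in>{a*ll..<a*ll+ll}. s (B (Suc d) t))"
      using sub(2)[of d a] that by (simp add: n_def ll_def)
    moreover have "0 \<le> s (B d a)" using rnn that n_def by simp
    ultimately have "s (B d a) powr p \<le> (\<Sum>t\<in>{a*ll..<a*ll+ll}. s (B (Suc d) t)) powr p"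
      using p by (intro powr_mono2) auto
    also have "\<dots> \<le> real (card {a*ll..<a*ll+ll}) powr (p - 1) * S a"
      unfolding S_def
    proof (rule power_mean)
      show "\<forall>t\<in>{a*ll..<a*ll+ll}. 0 \<le> s (B (Suc d) t)"
      proof
        fix t assume "t \<in> {a*ll..<a*ll+ll}"
        then have "t < NN l (Suc d)" using chlt[of a d t] that by (simp add: n_def ll_def)
        then show "0 \<le> s (B (Suc d) t)" using rnn by simp
      qed
    qed (use p llpos in auto)
    finally have "s (B d a) powr p \<le> real ll powr (p - 1) * S a" by simp
    then have "\<Theta> powr p * s (B d a) powr p \<le> \<Theta> powr p * (real ll powr (p - 1) * S a)"
      by (rule mult_left_mono) simp
    then have "(\<Theta> * s (B d a)) powr p \<le> x a powr p"
      using Th by (simp add: powr_mult xp mult.assoc)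
    moreover have "0 \<le> \<Theta> * s (B d a)" using Th \<open>0 \<le> s (B d a)\<close> by simp
    ultimately show ?thesis using p xnn by (metis powr_le_cancel' zero_less_one less_trans)
  qed
  have F3: "(\<Sum>I\<in>tree_level l (Suc d) (Suc d). s I powr p) = (\<Sum>a<n. S a)"
    unfolding SL[OF order_refl] NNk S_def by (simp add: sum_group)
  define X where "X = (\<Sum>a<n. x a powr p)"
  have X: "X = \<Theta> powr p * real ll powr (p - 1) * (\<Sum>a<n. S a)"
    by (simp add: X_def xp sum_distrib_left)
  have PR: "(\<Prod>i\<in>{1..Suc d}. real (l i) powr (p - 1)) = real n powr (p - 1) * real ll powr (p - 1)"
  proof -
    have "(\<Prod>i\<in>{1..Suc d}. real (l i) powr (p - 1)) = (\<Prod>i\<in>{1..Suc d}. real (l i)) powr (p - 1)"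
      by (rule prod_powr_distrib[symmetric])
    also have "(\<Prod>i\<in>{1..Suc d}. real (l i)) = real (NN l (Suc d))"
      by (simp add: NN_def)
    also have "\<dots> = real n * real ll" using NNk by simp
    finally show ?thesis by (simp add: powr_mult)
  qed
  define R where "R = r (B 0 0)"
  have root: "{1..(\<Prod>i\<in>{1..Suc d}. l i)} = B 0 0" by (auto simp: B_def BB_def CC_def)
  have IV: "R powr p > (1 - \<eta>) * real n powr (p - 1) * X"
  proof -
    have "(1 - \<eta>) * \<Theta> powr p * (real n powr (p - 1) * real ll powr (p - 1)) * (\<Sum>a<n. S a)
        = (1 - \<eta>) * real n powr (p - 1) * X" (is "?a = ?b") unfolding X by (simp only: mult_ac)
    moreover have "?a < R powr p" using H5 unfolding root PR F3 R_def .
    ultimately show ?thesis by (simp only:)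
  qed
  have N0: "NN l 0 = 1" by (simp add: NN_0)
  have F4: "R \<le> (\<Sum>a<NN l j. r (B j a))" if "j \<le> d" for j
    using that
  proof (induction j)
    case 0 then show ?case by (simp add: N0 R_def)
  next
    case (Suc j)
    then have jd: "j \<le> d" by simp
    have "R \<le> (\<Sum>m<NN l j. r (B j m))" using Suc jd by simp
    also have "\<dots> \<le> (\<Sum>m<NN l j. \<Sum>a\<in>{m * l (Suc j)..<m * l (Suc j) + l (Suc j)}. r (B (Suc j) a))"
      using sub(1)[OF jd] by (intro sum_mono) simp
    also have "\<dots> = (\<Sum>a<NN l (Suc j). r (B (Suc j) a))" by (simp add: sum_group NN_Suc)
    finally show ?case .
  qed
  have Rnn: "0 \<le> R" unfolding R_def using rnn[of 0 0] N0 by simp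
  have Xnn: "0 \<le> X" unfolding X_def by (simp add: sum_nonneg)
  define Y where "Y = (X / real n) powr (1/p)"
  have Ynn: "0 \<le> Y" unfolding Y_def by simp
  have Yp: "Y powr p = X / real n" unfolding Y_def using p Xnn npos by (simp add: powr_powr)
  have RY: "(1 - \<eta>) * real n * Y < R"
  proof -
    have "((1 - \<eta>) * real n * Y) powr p = (1 - \<eta>) powr p * (real n powr p * Y powr p)"
      using eta npos Ynn by (simp add: powr_mult)
    also have "real n powr p * Y powr p = real n powr (p - 1) * X"
    proof -
      have "real n powr p = real n powr (p - 1) * real n" using npos by (simp add: powr_diff)
      then show ?thesis using npos by (simp add: Yp)
    qed
    also have "(1 - \<eta>) powr p \<le> 1 - \<eta>" using eta p by (intro powr_le_one_le) auto
    then have "(1 - \<eta>) powr p * (real n powr (p - 1) * X) \<le> (1 - \<eta>) * (real n powr (p - 1) * X)"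
      using Xnn by (intro mult_right_mono) auto
    also have "\<dots> < R powr p" using IV by (simp add: mult.assoc)
    finally have "((1 - \<eta>) * real n * Y) powr p < R powr p" .
    moreover have "0 \<le> (1 - \<eta>) * real n * Y" using eta Ynn by simp
    ultimately show ?thesis using p Rnn by (metis powr_less_cancel' zero_less_one less_trans)
  qed
  have Rup: "R \<le> (1 + \<eta>) * (\<Sum>a<n. x a)"
  proof -
    have "R \<le> (\<Sum>a<n. r (B d a))" using F4[of d] by (simp add: n_def)
    also have "\<dots> \<le> (\<Sum>a<n. (1 + \<eta>) * x a)" using F1 by (intro sum_mono) simp
    finally show ?thesis by (simp add: sum_distrib_left)
  qed
  have Ypos: "0 < Y"
  proof (rule ccontr)
    assume "\<not> 0 < Y"
    then have Y0: "Y = 0" using Ynn by simp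
    then have "X / real n = 0" unfolding Y_def by simp
    then have "X = 0" using npos by simp
    then have "\<forall>a\<in>{..<n}. x a powr p = 0" unfolding X_def
      by (subst sum_nonneg_eq_0_iff[symmetric]) auto
    then have "\<forall>a<n. x a = 0" by simp
    then have "R \<le> 0" using Rup by simp
    moreover have "0 < R" using RY Y0 by simp
    ultimately show False by simp
  qed
  define hh where "hh = (1 + \<epsilon>) powr p - 1 - p * \<epsilon>"
  have hhpos: "0 \<le> hh"
  proof -
    have "0 \<le> 2 * p * real (NN l d) * \<eta>" using p eta by simp
    then show ?thesis using eta(4) unfolding hh_def by linarith
  qed
  have stab: "x a \<le> (1 + \<epsilon>) * Y" if "a < n" for a
  proof (rule ccontr)
    assume "\<not> x a \<le> (1 + \<epsilon>) * Y"
    then have xa: "(1 + \<epsilon>) * Y < x a" by simp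
    define t where "t b = x b / Y" for b
    have tnn: "0 \<le> t b" for b unfolding t_def using xnn Ynn by simp
    have Xpos: "0 < X" using Ypos Yp npos Xnn
      by (metis divide_eq_0_iff less_eq_real_def powr_eq_0_iff)
    have tp: "(\<Sum>b<n. t b powr p) = real n"
    proof -
      have "(\<Sum>b<n. t b powr p) = X / Y powr p"
        unfolding t_def X_def using Ypos xnn by (simp add: powr_divide sum_divide_distrib)
      also have "\<dots> = real n" using Yp Xpos npos by simp
      finally show ?thesis .
    qed
    have tb: "t b \<le> 1 + (t b powr p - 1) / p" for b
    proof -
      have "1 + p * (t b - 1) \<le> t b powr p" using bern_weak[of "t b" p] tnn p by simp
      then show ?thesis using p by (simp add: field_simps)
    qed
    have ta: "t a \<le> 1 + (t a powr p - 1) / p - hh / p"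
    proof -
      have t1: "1 + \<epsilon> < t a" unfolding t_def using xa Ypos by (simp add: field_simps)
      define e where "e = 1 + \<epsilon>"
      have e: "1 < e" using eps e_def by simp
      have "t a powr p = e powr p * (t a / e) powr p" using e tnn[of a] by (simp add: powr_divide)
      also have "\<dots> \<ge> e powr p * (1 + p * (t a / e - 1))"
        using bern_weak[of "t a / e" p] e tnn[of a] p by (intro mult_left_mono) auto
      finally have "e powr p * (1 + p * (t a / e - 1)) \<le> t a powr p" .
      moreover have "e powr p * (1 + p * (t a / e - 1)) = e powr p + p * (e powr p / e) * (t a - e)"
        using e by (simp add: field_simps)
      moreover have "e powr p / e \<ge> 1"
      proof -
        have "e powr p / e = e powr (p - 1)" using e by (simp add: powr_diff)
        also have "\<dots> \<ge> 1" using e p by (intro ge_one_powr_ge_zero) auto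
        finally show ?thesis .
      qed
      moreover have "p * 1 * (t a - e) \<le> p * (e powr p / e) * (t a - e)"
        using calculation(3) t1 p e_def by (intro mult_right_mono mult_left_mono) auto
      ultimately have "e powr p + p * (t a - e) \<le> t a powr p" by simp
      then have "p * t a \<le> p + t a powr p - 1 - hh" unfolding hh_def e_def by (simp add: algebra_simps)
      then have "t a \<le> (p + t a powr p - 1 - hh) / p" using p by (simp add: field_simps)
      also have "\<dots> = 1 + (t a powr p - 1) / p - hh / p" using p by (simp add: field_simps)
      finally show ?thesis .
    qed
    have "(\<Sum>b<n. t b) \<le> (\<Sum>b<n. 1 + (t b powr p - 1) / p - (if b = a then hh / p else 0))"
      using tb ta by (intro sum_mono) auto
    also have "\<dots> = real n + ((\<Sum>b<n. t b powr p) - real n) / p - hh / p"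
      using that by (simp add: sum.distrib sum_subtractf sum_divide_distrib[symmetric] diff_divide_distrib)
    also have "\<dots> = real n - hh / p" using tp by simp
    finally have up: "(\<Sum>b<n. t b) \<le> real n - hh / p" .
    have "(1 - \<eta>) * real n * Y < (1 + \<eta>) * (\<Sum>a<n. x a)" using RY Rup by simp
    also have "(\<Sum>a<n. x a) = Y * (\<Sum>b<n. t b)"
      unfolding t_def using Ypos by (simp add: sum_distrib_left)
    finally have "(1 - \<eta>) * real n * Y < Y * ((1 + \<eta>) * (\<Sum>b<n. t b))" by (simp add: ac_simps)
    then have "(1 - \<eta>) * real n < (1 + \<eta>) * (\<Sum>b<n. t b)" using Ypos by (simp add: ac_simps)
    also have "\<dots> \<le> (1 + \<eta>) * (real n - hh / p)" using up eta by (intro mult_left_mono) auto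
    finally have "(1 - \<eta>) * real n < (1 + \<eta>) * (real n - hh / p)" .
    then have "(1 + \<eta>) * hh / p < 2 * \<eta> * real n" by (simp add: algebra_simps)
    moreover have "hh / p \<le> (1 + \<eta>) * hh / p"
    proof -
      have "0 \<le> \<eta> * hh" using hhpos eta by simp
      then have "hh \<le> (1 + \<eta>) * hh" by (simp add: algebra_simps)
      then show ?thesis using p by (simp add: divide_right_mono)
    qed
    moreover have "2 * \<eta> * real n \<le> hh / p" using eta(4) p unfolding hh_def n_def
      by (simp add: field_simps)
    ultimately show False by simp
  qed
  define \<alpha> where "\<alpha> = (1 + \<eta>) * (1 + \<epsilon>)"
  define g where "g = \<alpha> - (1 - \<eta>)"
  define \<gamma> where "\<gamma> = \<alpha> - g * real n"
  have \<alpha>1: "1 + \<epsilon> \<le> \<alpha>" unfolding \<alpha>_def using eta eps by (simp add: algebra_simps)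
  have \<alpha>1': "1 \<le> \<alpha>" using \<alpha>1 eps by simp
  have g0: "0 \<le> g" unfolding g_def using \<alpha>1' eta by simp
  have taunn: "0 \<le> \<tau>" using tau2 by (meson order.trans powr_ge_zero)
  have key: "\<tau> * \<alpha> < \<gamma>"
  proof -
    have "\<eta> * \<epsilon> \<le> \<eta>" using eta eps by (simp add: mult_left_le)
    then have "g \<le> \<epsilon> + 3 * \<eta>" unfolding g_def \<alpha>_def by (simp add: algebra_simps)
    then have "g * real n \<le> (\<epsilon> + 3 * \<eta>) * real n" by (simp add: mult_right_mono)
    also have "\<dots> = \<epsilon> * real (NN l d) + 3 * \<eta> * real (NN l d)" by (simp add: n_def algebra_simps)
    also have "\<dots> \<le> (1 - \<tau>) / 2" using eps(3) eta(3) by simp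
    also have "\<dots> < (1 - \<tau>)" using tau3 by simp
    also have "\<dots> \<le> (1 - \<tau>) * \<alpha>" using tau3 \<alpha>1' by simp
    finally show ?thesis unfolding \<gamma>_def by (simp add: algebra_simps)
  qed
  have \<gamma>pos: "0 < \<gamma>" using key taunn \<alpha>1' by (smt (verit) mult_nonneg_nonneg)
  have lposd: "\<forall>i\<in>{1..d}. 1 \<le> l i" using lpos by auto
  have Qpos: "0 < CC l d j" for j using CC_pos[OF lposd] by simp
  have NQ: "real (NN l j) * real (CC l d j) = real n" if "j \<le> d" for j
    using NN_CC[OF that, of l] n_def by (metis of_nat_mult)
  have Qstep: "CC l d j = l (Suc j) * CC l d (Suc j)" if "j < d" for j using CC_Suc[OF that] by simp
  have U1: "\<forall>m<NN l j. r (B j m) \<le> real (CC l d j) * \<alpha> * Y" if "j \<le> d" for j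
    using that
  proof (induction j rule: inc_induct)
    case base
    show ?case
    proof (intro allI impI)
      fix m assume m: "m < NN l d"
      have "r (B d m) \<le> (1 + \<eta>) * x m" using F1 m n_def by simp
      also have "\<dots> \<le> (1 + \<eta>) * ((1 + \<epsilon>) * Y)" using stab m n_def eta by (intro mult_left_mono) auto
      finally show "r (B d m) \<le> real (CC l d d) * \<alpha> * Y" by (simp add: CC_self \<alpha>_def mult.assoc)
    qed
  next
    case (step j)
    show ?case
    proof (intro allI impI)
      fix m assume m: "m < NN l j"
      have "r (B j m) \<le> (\<Sum>a\<in>{m * l (Suc j)..<m * l (Suc j) + l (Suc j)}. r (B (Suc j) a))"
        using sub(1)[of j m] step m by simp
      also have "\<dots> \<le> (\<Sum>a\<in>{m * l (Suc j)..<m * l (Suc j) + l (Suc j)}. real (CC l d (Suc j)) * \<alpha> * Y)"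
        using step.IH chlt[OF m] by (intro sum_mono) auto
      also have "\<dots> = real (l (Suc j)) * (real (CC l d (Suc j)) * \<alpha> * Y)" by simp
      also have "\<dots> = real (CC l d j) * \<alpha> * Y" using Qstep[of j] step by (simp add: mult.assoc)
      finally show "r (B j m) \<le> real (CC l d j) * \<alpha> * Y" .
    qed
  qed
  have U2: "\<forall>m<NN l j. \<Theta> * s (B j m) \<le> real (CC l d j) * \<alpha> * Y" if "j \<le> d" for j
    using that
  proof (induction j rule: inc_induct)
    case base
    show ?case
    proof (intro allI impI)
      fix m assume m: "m < NN l d"
      have "\<Theta> * s (B d m) \<le> x m" using F2 m n_def by simp
      also have "\<dots> \<le> (1 + \<epsilon>) * Y" using stab m n_def by simp
      also have "\<dots> \<le> \<alpha> * Y" using \<alpha>1 Ynn by (simp add: mult_right_mono)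
      finally show "\<Theta> * s (B d m) \<le> real (CC l d d) * \<alpha> * Y" by (simp add: CC_self)
    qed
  next
    case (step j)
    show ?case
    proof (intro allI impI)
      fix m assume m: "m < NN l j"
      have "\<Theta> * s (B j m) \<le> \<Theta> * (\<Sum>a\<in>{m * l (Suc j)..<m * l (Suc j) + l (Suc j)}. s (B (Suc j) a))"
        using sub(2)[of j m] step m Th by simp
      also have "\<dots> = (\<Sum>a\<in>{m * l (Suc j)..<m * l (Suc j) + l (Suc j)}. \<Theta> * s (B (Suc j) a))"
        by (simp add: sum_distrib_left)
      also have "\<dots> \<le> (\<Sum>a\<in>{m * l (Suc j)..<m * l (Suc j) + l (Suc j)}. real (CC l d (Suc j)) * \<alpha> * Y)"
        using step.IH chlt[OF m] by (intro sum_mono) auto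
      also have "\<dots> = real (l (Suc j)) * (real (CC l d (Suc j)) * \<alpha> * Y)" by simp
      also have "\<dots> = real (CC l d j) * \<alpha> * Y" using Qstep[of j] step by (simp add: mult.assoc)
      finally show "\<Theta> * s (B j m) \<le> real (CC l d j) * \<alpha> * Y" .
    qed
  qed
  have L1: "real (CC l d j) * \<gamma> * Y < r (B j m)" if j: "j \<le> d" and m: "m < NN l j" for j m
  proof -
    define NJ where "NJ = real (NN l j)"
    define Q where "Q = real (CC l d j)"
    have NJQ: "NJ * Q = real n" using NQ[OF j] by (simp add: NJ_def Q_def)
    have Q1: "1 \<le> Q" using Qpos[of j] by (simp add: Q_def)
    have NJ1: "1 \<le> NJ" using NN_pos[OF lposd j] by (simp add: NJ_def)
    have "R \<le> (\<Sum>a<NN l j. r (B j a))" using F4[OF j] .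
    also have "\<dots> = r (B j m) + (\<Sum>a\<in>{..<NN l j} - {m}. r (B j a))"
      using m by (simp add: sum.remove)
    also have "(\<Sum>a\<in>{..<NN l j} - {m}. r (B j a)) \<le> real (card ({..<NN l j} - {m})) * (Q * \<alpha> * Y)"
      using U1[OF j] unfolding Q_def by (intro sum_bounded_above) auto
    also have "real (card ({..<NN l j} - {m})) = NJ - 1"
      using m NN_pos[OF lposd j] by (simp add: NJ_def of_nat_diff)
    finally have A: "R \<le> r (B j m) + (NJ - 1) * (Q * \<alpha> * Y)" by simp
    have C: "(1 - \<eta>) * real n * Y - (NJ - 1) * (Q * \<alpha> * Y) - Q * \<gamma> * Y = Y * g * NJ * Q * (Q - 1)"
      unfolding \<gamma>_def g_def NJQ[symmetric] by (simp add: algebra_simps)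
    have "0 \<le> Y * g * NJ * Q * (Q - 1)" using Ynn g0 NJ1 Q1 by simp
    then show ?thesis using A C RY unfolding Q_def by linarith
  qed
  have conc1: "Max (s ` tree_level l (Suc d) j) \<le> M * Min (s ` tree_level l (Suc d) j)" if j: "j \<le> d" for j
  proof -
    have jk: "j \<le> Suc d" using j by simp
    have Mpos: "0 < M" using M lam Th by (smt (verit) divide_pos_pos)
    have lamle: "lam \<le> \<tau> * (M * \<Theta>)" using tau1 Mpos Th by (simp add: pos_divide_le_eq)
    have all: "s (B j m) \<le> M * s (B j m')" if m: "m < NN l j" and m': "m' < NN l j" for m m'
    proof -
      define K where "K = real (CC l d j) * Y"
      have Kpos: "0 < K" unfolding K_def using Qpos[of j] Ypos by simp
      have a1: "\<Theta> * s (B j m) \<le> K * \<alpha>" using U2[OF j] m unfolding K_def by (simp add: ac_simps)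
      have a2: "K * \<gamma> < lam * s (B j m')" using L1[OF j m'] rnn(3)[OF jk m'] unfolding K_def
        by (simp add: ac_simps)
      have "lam * \<alpha> \<le> \<tau> * (M * \<Theta>) * \<alpha>" using lamle \<alpha>1' by (simp add: mult_right_mono)
      also have "\<dots> = M * \<Theta> * (\<tau> * \<alpha>)" by (simp add: ac_simps)
      also have "\<dots> \<le> M * \<Theta> * \<gamma>" using key Mpos Th by (simp add: less_imp_le)
      finally have a3: "lam * \<alpha> \<le> M * \<Theta> * \<gamma>" .
      have "\<Theta> * lam * s (B j m) \<le> lam * (K * \<alpha>)" using a1 lam by (simp add: ac_simps)
      also have "\<dots> = K * (lam * \<alpha>)" by (simp add: ac_simps)
      also have "\<dots> \<le> K * (M * \<Theta> * \<gamma>)" using a3 Kpos by (simp add: mult_left_mono)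
      also have "\<dots> = M * \<Theta> * (K * \<gamma>)" by (simp add: ac_simps)
      also have "\<dots> \<le> M * \<Theta> * (lam * s (B j m'))" using a2 Mpos Th by (simp add: less_imp_le)
      finally have "(\<Theta> * lam) * s (B j m) \<le> (\<Theta> * lam) * (M * s (B j m'))" by (simp add: ac_simps)
      then show ?thesis using Th lam by simp
    qed
    have fin: "finite (s ` tree_level l (Suc d) j)" using TL[OF jk] by simp
    have ne: "s ` tree_level l (Suc d) j \<noteq> {}" using TL[OF jk] NN_pos[OF lpos jk] by auto
    obtain I where I: "I \<in> tree_level l (Suc d) j" "Max (s ` tree_level l (Suc d) j) = s I"
      using Max_in[OF fin ne] by auto
    obtain I' where I': "I' \<in> tree_level l (Suc d) j" "Min (s ` tree_level l (Suc d) j) = s I'"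
      using Min_in[OF fin ne] by auto
    obtain m where "m < NN l j" "I = B j m" using I TL[OF jk] by auto
    moreover obtain m' where "m' < NN l j" "I' = B j m'" using I' TL[OF jk] by auto
    ultimately show ?thesis using all I I' by simp
  qed
  have conc2: "r I1 powr p > (1 - \<mu>) * real (l (Suc i)) powr (p - 1)
                 * (\<Sum>J\<in>tree_children l (Suc d) i I1. r J powr p)"
    if i: "i < d" and I1: "I1 \<in> tree_level l (Suc d) i" for i I1
  proof -
    obtain m where m: "m < NN l i" "I1 = B i m" using I1 TL[of i] i by auto
    define Q' where "Q' = real (CC l d (Suc i))"
    define li where "li = real (l (Suc i))"
    have li: "1 \<le> li" using lpos i unfolding li_def by auto
    have Q'nn: "0 \<le> Q'" unfolding Q'_def by simp
    have QQ: "real (CC l d i) = li * Q'" unfolding li_def Q'_def using Qstep[OF i] by simp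
    have "(\<Sum>J\<in>tree_children l (Suc d) i I1. r J powr p)
          = (\<Sum>a\<in>{m * l (Suc i)..<m * l (Suc i) + l (Suc i)}. r (B (Suc i) a) powr p)"
      using SC[of i m "\<lambda>J. r J powr p"] m i by simp
    also have "\<dots> \<le> (\<Sum>a\<in>{m * l (Suc i)..<m * l (Suc i) + l (Suc i)}. (Q' * \<alpha> * Y) powr p)"
    proof (rule sum_mono)
      fix a assume a: "a \<in> {m * l (Suc i)..<m * l (Suc i) + l (Suc i)}"
      have aN: "a < NN l (Suc i)" using chlt[OF m(1) a] .
      have "r (B (Suc i) a) \<le> Q' * \<alpha> * Y" using U1[of "Suc i"] i aN unfolding Q'_def by simp
      then show "r (B (Suc i) a) powr p \<le> (Q' * \<alpha> * Y) powr p"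
        using rnn(1)[of "Suc i" a] i aN p by (intro powr_mono2) auto
    qed
    also have "\<dots> = li * (Q' * \<alpha> * Y) powr p" by (simp add: li_def)
    finally have S1: "(\<Sum>J\<in>tree_children l (Suc d) i I1. r J powr p) \<le> li * (Q' * \<alpha> * Y) powr p" .
    have "(1 - \<mu>) * li powr (p - 1) * (\<Sum>J\<in>tree_children l (Suc d) i I1. r J powr p)
          \<le> (1 - \<mu>) * li powr (p - 1) * (li * (Q' * \<alpha> * Y) powr p)"
      using S1 mu by (intro mult_left_mono) auto
    also have "\<dots> = (1 - \<mu>) * ((li powr (p - 1) * li) * (Q' * \<alpha> * Y) powr p)" by (simp add: ac_simps)
    also have "li powr (p - 1) * li = li powr p" using li by (simp add: powr_diff)
    also have "(1 - \<mu>) * (li powr p * (Q' * \<alpha> * Y) powr p) = (1 - \<mu>) * (li * Q' * \<alpha> * Y) powr p"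
      using li Q'nn \<alpha>1' Ynn by (simp add: powr_mult mult.assoc)
    also have "\<dots> = ((1 - \<mu>) powr (1/p) * (li * Q' * \<alpha> * Y)) powr p"
      using mu p li Q'nn \<alpha>1' Ynn by (simp add: powr_mult powr_powr)
    also have "\<dots> \<le> (real (CC l d i) * \<gamma> * Y) powr p"
    proof (rule powr_mono2)
      have "(1 - \<mu>) powr (1/p) * \<alpha> \<le> \<tau> * \<alpha>" using tau2 \<alpha>1' by (simp add: mult_right_mono)
      also have "\<dots> \<le> \<gamma>" using key by simp
      finally have "(1 - \<mu>) powr (1/p) * \<alpha> \<le> \<gamma>" .
      then have "(1 - \<mu>) powr (1/p) * \<alpha> * (li * Q' * Y) \<le> \<gamma> * (li * Q' * Y)"
        using li Q'nn Ynn by (intro mult_right_mono) auto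
      then show "(1 - \<mu>) powr (1/p) * (li * Q' * \<alpha> * Y) \<le> real (CC l d i) * \<gamma> * Y"
        unfolding QQ by (simp add: ac_simps)
    qed (use p li Q'nn \<alpha>1' Ynn in auto)
    also have "\<dots> < r I1 powr p"
      using L1[of i m] i m \<gamma>pos Ynn p by (intro powr_less_mono2) auto
    finally show ?thesis by (simp add: li_def)
  qed
  show ?thesis using conc1 conc2 by blast
qed

theorem lemma3p4:
  fixes p \<mu> lam \<Theta> M :: real and d :: nat and l :: "nat \<Rightarrow> nat"
  assumes "1 < p"
    and "\<forall>i\<in>{1..d}. 1 \<le> l i"
    and "0 < \<mu>" and "\<mu> < 1" and "0 < lam" and "0 < \<Theta>" and "M > lam / \<Theta>"
  shows "\<forall>\<eta>1::real. 0 < \<eta>1 \<and> \<eta>1 < 1 \<longrightarrow>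
    (\<exists>\<eta>::real. 0 < \<eta> \<and> \<eta> < \<eta>1 \<and>
      (\<forall>(ld1::nat) (r::nat set \<Rightarrow> real) (s::nat set \<Rightarrow> real).
        let lt = l(Suc d := ld1);
            k = Suc d;
            \<Lambda> = tree_level lt k;
            ch = tree_children lt k;
            L = (\<Prod>i\<in>{1..k}. lt i)
        in
        (1 \<le> ld1
         \<and> (\<forall>I\<in>interval_tree lt k. 0 \<le> r I \<and> 0 \<le> s I)
         \<and> (\<forall>I\<in>interval_tree lt k. r I \<le> lam * s I)
         \<and> (\<forall>i\<le>d. \<forall>I\<in>\<Lambda> i. r I \<le> (\<Sum>J\<in>ch i I. r J) \<and> s I \<le> (\<Sum>J\<in>ch i I. s J))
         \<and> (\<forall>I\<in>\<Lambda> d. r I powr p \<le> (1 + \<eta>) * \<Theta> powr p * real ld1 powr (p - 1)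
                                     * (\<Sum>J\<in>ch d I. s J powr p))
         \<and> r {1..L} powr p > (1 - \<eta>) * \<Theta> powr p * (\<Prod>i\<in>{1..k}. real (lt i) powr (p - 1))
                                * (\<Sum>I\<in>\<Lambda> k. s I powr p))
        \<longrightarrow>
        (\<forall>j\<le>d. Max (s ` \<Lambda> j) \<le> M * Min (s ` \<Lambda> j))
        \<and> (\<forall>i<d. \<forall>I1\<in>\<Lambda> i. r I1 powr p > (1 - \<mu>) * real (lt (Suc i)) powr (p - 1)
                                          * (\<Sum>J\<in>ch i I1. r J powr p))))"
proof (intro allI impI)
  fix \<eta>1 :: real assume h1: "0 < \<eta>1 \<and> \<eta>1 < 1"
  note p = assms(1) and mu = assms(3,4) and lam = assms(5) and Th = assms(6) and M = assms(7)
  define n where "n = NN l d"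
  have npos: "0 < n" unfolding n_def using NN_pos[OF assms(2), of d] by simp
  define \<tau> where "\<tau> = max (lam / (M * \<Theta>)) ((1 - \<mu>) powr (1/p))"
  have tau1: "lam / (M * \<Theta>) \<le> \<tau>" and tau2: "(1 - \<mu>) powr (1/p) \<le> \<tau>" unfolding \<tau>_def by auto
  have MT: "lam < M * \<Theta>" using M Th by (simp add: pos_divide_less_eq)
  have t1: "lam / (M * \<Theta>) < 1" using MT lam by simp
  have t2: "(1 - \<mu>) powr (1/p) < 1"
  proof -
    have "(1 - \<mu>) powr (1/p) < 1 powr (1/p)" using mu p by (intro powr_less_mono2) auto
    then show ?thesis by simp
  qed
  have tau3: "\<tau> < 1" unfolding \<tau>_def using t1 t2 by simp
  have taunn: "0 \<le> \<tau>" using tau2 by (meson order.trans powr_ge_zero)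
  define \<epsilon> where "\<epsilon> = (1 - \<tau>) / (4 * real n)"
  have eps0: "0 < \<epsilon>" unfolding \<epsilon>_def using tau3 npos by simp
  have epsn: "\<epsilon> * real n = (1 - \<tau>) / 4" unfolding \<epsilon>_def using npos by simp
  have eps1: "\<epsilon> \<le> 1"
  proof -
    have "\<epsilon> * 1 \<le> \<epsilon> * real n" using eps0 npos by (intro mult_left_mono) auto
    then show ?thesis using epsn taunn by simp
  qed
  define hh where "hh = (1 + \<epsilon>) powr p - 1 - p * \<epsilon>"
  have hhpos: "0 < hh" unfolding hh_def using bern_strict[of "1 + \<epsilon>" p] eps0 p by simp
  define \<eta> where "\<eta> = min (\<eta>1 / 2) (min ((1 - \<tau>) / (12 * real n)) (hh / (2 * p * real n)))"
  have eta0: "0 < \<eta>" unfolding \<eta>_def using h1 tau3 npos hhpos p by simp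
  have eta1: "\<eta> < \<eta>1"
  proof -
    have "\<eta> \<le> \<eta>1 / 2" unfolding \<eta>_def by simp
    then show ?thesis using h1 by simp
  qed
  have etalt1: "\<eta> < 1" using eta1 h1 by simp
  have eta3: "3 * \<eta> * real n \<le> (1 - \<tau>) / 4"
  proof -
    have "\<eta> \<le> (1 - \<tau>) / (12 * real n)" unfolding \<eta>_def by simp
    then have "\<eta> * (12 * real n) \<le> 1 - \<tau>" using npos by (simp add: pos_le_divide_eq)
    then show ?thesis by simp
  qed
  have eta4: "2 * p * real n * \<eta> \<le> hh"
  proof -
    have "\<eta> \<le> hh / (2 * p * real n)" unfolding \<eta>_def by simp
    then have "\<eta> * (2 * p * real n) \<le> hh" using npos p by (simp add: pos_le_divide_eq)
    then show ?thesis by (simp add: ac_simps)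
  qed
  show "\<exists>\<eta>::real. 0 < \<eta> \<and> \<eta> < \<eta>1 \<and>
      (\<forall>(ld1::nat) (r::nat set \<Rightarrow> real) (s::nat set \<Rightarrow> real).
        let lt = l(Suc d := ld1);
            k = Suc d;
            \<Lambda> = tree_level lt k;
            ch = tree_children lt k;
            L = (\<Prod>i\<in>{1..k}. lt i)
        in
        (1 \<le> ld1
         \<and> (\<forall>I\<in>interval_tree lt k. 0 \<le> r I \<and> 0 \<le> s I)
         \<and> (\<forall>I\<in>interval_tree lt k. r I \<le> lam * s I)
         \<and> (\<forall>i\<le>d. \<forall>I\<in>\<Lambda> i. r I \<le> (\<Sum>J\<in>ch i I. r J) \<and> s I \<le> (\<Sum>J\<in>ch i I. s J))
         \<and> (\<forall>I\<in>\<Lambda> d. r I powr p \<le> (1 + \<eta>) * \<Theta> powr p * real ld1 powr (p - 1)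
                                     * (\<Sum>J\<in>ch d I. s J powr p))
         \<and> r {1..L} powr p > (1 - \<eta>) * \<Theta> powr p * (\<Prod>i\<in>{1..k}. real (lt i) powr (p - 1))
                                * (\<Sum>I\<in>\<Lambda> k. s I powr p))
        \<longrightarrow>
        (\<forall>j\<le>d. Max (s ` \<Lambda> j) \<le> M * Min (s ` \<Lambda> j))
        \<and> (\<forall>i<d. \<forall>I1\<in>\<Lambda> i. r I1 powr p > (1 - \<mu>) * real (lt (Suc i)) powr (p - 1)
                                          * (\<Sum>J\<in>ch i I1. r J powr p)))"
  proof (intro exI[of _ \<eta>] conjI allI)
    show "0 < \<eta>" by (rule eta0)
    show "\<eta> < \<eta>1" by (rule eta1)
    fix ld1 :: nat and r s :: "nat set \<Rightarrow> real"
    show "let lt = l(Suc d := ld1);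
            k = Suc d;
            \<Lambda> = tree_level lt k;
            ch = tree_children lt k;
            L = (\<Prod>i\<in>{1..k}. lt i)
        in
        (1 \<le> ld1
         \<and> (\<forall>I\<in>interval_tree lt k. 0 \<le> r I \<and> 0 \<le> s I)
         \<and> (\<forall>I\<in>interval_tree lt k. r I \<le> lam * s I)
         \<and> (\<forall>i\<le>d. \<forall>I\<in>\<Lambda> i. r I \<le> (\<Sum>J\<in>ch i I. r J) \<and> s I \<le> (\<Sum>J\<in>ch i I. s J))
         \<and> (\<forall>I\<in>\<Lambda> d. r I powr p \<le> (1 + \<eta>) * \<Theta> powr p * real ld1 powr (p - 1)
                                     * (\<Sum>J\<in>ch d I. s J powr p))
         \<and> r {1..L} powr p > (1 - \<eta>) * \<Theta> powr p * (\<Prod>i\<in>{1..k}. real (lt i) powr (p - 1))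
                                * (\<Sum>I\<in>\<Lambda> k. s I powr p))
        \<longrightarrow>
        (\<forall>j\<le>d. Max (s ` \<Lambda> j) \<le> M * Min (s ` \<Lambda> j))
        \<and> (\<forall>i<d. \<forall>I1\<in>\<Lambda> i. r I1 powr p > (1 - \<mu>) * real (lt (Suc i)) powr (p - 1)
                                          * (\<Sum>J\<in>ch i I1. r J powr p))"
      unfolding Let_def
    proof (intro impI, elim conjE)
      let ?lt = "l(Suc d := ld1)"
      assume ld1: "1 \<le> ld1"
        and H1: "\<forall>I\<in>interval_tree ?lt (Suc d). 0 \<le> r I \<and> 0 \<le> s I"
        and H2: "\<forall>I\<in>interval_tree ?lt (Suc d). r I \<le> lam * s I"
        and H3: "\<forall>i\<le>d. \<forall>I\<in>tree_level ?lt (Suc d) i. r I \<le> (\<Sum>J\<in>tree_children ?lt (Suc d) i I. r J)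
                 \<and> s I \<le> (\<Sum>J\<in>tree_children ?lt (Suc d) i I. s J)"
        and H4: "\<forall>I\<in>tree_level ?lt (Suc d) d. r I powr p \<le> (1 + \<eta>) * \<Theta> powr p * real ld1 powr (p - 1)
                 * (\<Sum>J\<in>tree_children ?lt (Suc d) d I. s J powr p)"
        and H5: "r {1..(\<Prod>i\<in>{1..Suc d}. ?lt i)} powr p > (1 - \<eta>) * \<Theta> powr p
                 * (\<Prod>i\<in>{1..Suc d}. real (?lt i) powr (p - 1))
                 * (\<Sum>I\<in>tree_level ?lt (Suc d) (Suc d). s I powr p)"
      have lpos: "\<forall>i\<in>{1..Suc d}. 1 \<le> ?lt i" using assms(2) ld1 by auto
      have NNeq: "NN ?lt d = n" unfolding n_def NN_def by (rule prod.cong) auto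
      have H4': "\<forall>I\<in>tree_level ?lt (Suc d) d. r I powr p \<le> (1 + \<eta>) * \<Theta> powr p * real (?lt (Suc d)) powr (p - 1)
                 * (\<Sum>J\<in>tree_children ?lt (Suc d) d I. s J powr p)" using H4 by simp
      show "(\<forall>j\<le>d. Max (s ` tree_level ?lt (Suc d) j) \<le> M * Min (s ` tree_level ?lt (Suc d) j))
        \<and> (\<forall>i<d. \<forall>I1\<in>tree_level ?lt (Suc d) i. r I1 powr p > (1 - \<mu>) * real (?lt (Suc i)) powr (p - 1)
                                          * (\<Sum>J\<in>tree_children ?lt (Suc d) i I1. r J powr p))"
      proof -
        have a: "\<epsilon> * real (NN ?lt d) \<le> (1 - \<tau>) / 4" unfolding NNeq using epsn by simp
        have b: "3 * \<eta> * real (NN ?lt d) \<le> (1 - \<tau>) / 4" unfolding NNeq using eta3 by simp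
        have c: "2 * p * real (NN ?lt d) * \<eta> \<le> (1 + \<epsilon>) powr p - 1 - p * \<epsilon>"
          unfolding NNeq using eta4 by (simp add: hh_def)
        show ?thesis
          by (rule main_fixed[OF p lpos mu lam Th M tau1 tau2 tau3 eps0 eps1 a eta0 etalt1 b c H1 H2 H3 H4' H5])
      qed
    qed
  qed
qed

end
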